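(* Let $m,n$ be integers with $3\leq m\leq n$ and $n\equiv -1 \pmod m$. Then every $(m,n;6)$-bipartite biregular graph has at least $\left(\frac{n}{m}+1\right)(n+1)(m-1)$ vertices, i.e. $B_c(m,n;6)\geq \left(\frac{n}{m}+1\right)(n+1)(m-1)$. Moreover, if a Steiner system $S(2,m,n(m-1)+m)$ exists, then deleting one point of it together with all blocks containing that point yields an incidence structure whose incidence graph is an $(m,n;6)$-bipartite biregular graph on exactly $\left(\frac{n}{m}+1\right)(n+1)(m-1)$ vertices; in that case this graph is an $(m,n;6)$-bipartite biregular cage and $B_c(m,n;6)=\left(\frac{n}{m}+1\right)(n+1)(m-1)$.
   Context: For integers $a,b\geq 2$ and even $g\ge 4$, an $(a,b;g)$-bipartite biregular graph is a finite simple bipartite graph of girth exactly $g$ in which all vertices of one bipartition class have degree $a$ and all vertices of the other class have degree $b$. An $(a,b;g)$-bipartite biregular cage is such a graph of minimum possible order, and $B_c(a,b;g)$ denotes this minimum order. A Steiner system $S(2,k,v)$ is a set of $v$ points together with a family of $k$-element subsets (blocks) such that every pair of distinct points lies in exactly one block. The incidence graph of a point-block structure is the bipartite graph on points and blocks with a point adjacent to a block iff the point lies in the block. *)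

theory Defs
  imports Complex_Main "HOL-Number_Theory.Cong"
begin

definition simple_graph :: "'a set \<Rightarrow> ('a \<Rightarrow> 'a \<Rightarrow> bool) \<Rightarrow> bool" where
  "simple_graph V E \<longleftrightarrow> finite V \<and> (\<forall>x y. E x y \<longrightarrow> x \<in> V \<and> y \<in> V)
     \<and> (\<forall>x y. E x y \<longrightarrow> E y x) \<and> (\<forall>x. \<not> E x x)"

definition degree :: "'a set \<Rightarrow> ('a \<Rightarrow> 'a \<Rightarrow> bool) \<Rightarrow> 'a \<Rightarrow> nat" where
  "degree V E x = card {y \<in> V. E x y}"

definition has_cycle_of_length :: "'a set \<Rightarrow> ('a \<Rightarrow> 'a \<Rightarrow> bool) \<Rightarrow> nat \<Rightarrow> bool" where
  "has_cycle_of_length V E k \<longleftrightarrow> 3 \<le> k \<and> (\<exists>xs. length xs = k \<and> distinct xs \<and> set xs \<subseteq> V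
     \<and> (\<forall>i<k. E (xs ! i) (xs ! ((i + 1) mod k))))"

definition has_girth :: "'a set \<Rightarrow> ('a \<Rightarrow> 'a \<Rightarrow> bool) \<Rightarrow> nat \<Rightarrow> bool" where
  "has_girth V E g \<longleftrightarrow> has_cycle_of_length V E g \<and> (\<forall>k<g. \<not> has_cycle_of_length V E k)"

definition bipartite_biregular :: "nat \<Rightarrow> nat \<Rightarrow> nat \<Rightarrow> 'a set \<Rightarrow> ('a \<Rightarrow> 'a \<Rightarrow> bool) \<Rightarrow> bool" where
  "bipartite_biregular a b g V E \<longleftrightarrow> simple_graph V E \<and>
     (\<exists>A B. A \<union> B = V \<and> A \<inter> B = {} \<and>
        (\<forall>x y. E x y \<longrightarrow> (x \<in> A \<and> y \<in> B) \<or> (x \<in> B \<and> y \<in> A)) \<and>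
        (\<forall>x\<in>A. degree V E x = a) \<and> (\<forall>x\<in>B. degree V E x = b)) \<and>
     has_girth V E g"

text \<open>B_c(a,b;g): minimum order. Every finite graph is isomorphic to one with vertices
  in nat, so minimising over graphs on nat is the same as over all graphs.\<close>
definition Bc :: "nat \<Rightarrow> nat \<Rightarrow> nat \<Rightarrow> nat" where
  "Bc a b g = (LEAST N. \<exists>(V::nat set) E. bipartite_biregular a b g V E \<and> card V = N)"

definition is_bb_cage :: "nat \<Rightarrow> nat \<Rightarrow> nat \<Rightarrow> 'a set \<Rightarrow> ('a \<Rightarrow> 'a \<Rightarrow> bool) \<Rightarrow> bool" where
  "is_bb_cage a b g V E \<longleftrightarrow> bipartite_biregular a b g V E \<and> card V = Bc a b g"

definition steiner_system_2 :: "nat \<Rightarrow> nat \<Rightarrow> 'p set \<Rightarrow> 'p set set \<Rightarrow> bool" where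
  "steiner_system_2 k v P Bl \<longleftrightarrow> finite P \<and> card P = v \<and>
     (\<forall>B\<in>Bl. B \<subseteq> P \<and> card B = k) \<and>
     (\<forall>x\<in>P. \<forall>y\<in>P. x \<noteq> y \<longrightarrow> (\<exists>!B. B \<in> Bl \<and> x \<in> B \<and> y \<in> B))"

definition inc_vertices :: "'p set \<Rightarrow> 'p set set \<Rightarrow> ('p + 'p set) set" where
  "inc_vertices P Bl = Inl ` P \<union> Inr ` Bl"

definition inc_edges :: "'p set \<Rightarrow> 'p set set \<Rightarrow> ('p + 'p set) \<Rightarrow> ('p + 'p set) \<Rightarrow> bool" where
  "inc_edges P Bl u w \<longleftrightarrow> (\<exists>x B. x \<in> P \<and> B \<in> Bl \<and> x \<in> B \<and>
      ((u = Inl x \<and> w = Inr B) \<or> (u = Inr B \<and> w = Inl x)))"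

definition del_points :: "'p set \<Rightarrow> 'p \<Rightarrow> 'p set" where
  "del_points P p = P - {p}"

definition del_blocks :: "'p set set \<Rightarrow> 'p \<Rightarrow> 'p set set" where
  "del_blocks Bl p = {B \<in> Bl. p \<notin> B}"

end

theory Submission
  imports Defs
begin


lemma cyc4: assumes "E b a1" "E a1 c" "E c a2" "E a2 b"
  shows "\<forall>i<4. E ([b, a1, c, a2] ! i) ([b, a1, c, a2] ! ((i + 1) mod 4))"
proof (intro allI impI)
  fix i :: nat assume "i < 4"
  then have "i = 0 \<or> i = 1 \<or> i = 2 \<or> i = 3" by linarith
  then show "E ([b, a1, c, a2] ! i) ([b, a1, c, a2] ! ((i + 1) mod 4))"
    using assms by (elim disjE) (simp_all add: numeral_2_eq_2)
qed
lemma cyc6: assumes "E x0 x1" "E x1 x2" "E x2 x3" "E x3 x4" "E x4 x5" "E x5 x0"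
  shows "\<forall>i<6. E ([x0, x1, x2, x3, x4, x5] ! i) ([x0, x1, x2, x3, x4, x5] ! ((i + 1) mod 6))"
proof (intro allI impI)
  fix i :: nat assume "i < 6"
  then have "i = 0 \<or> i = 1 \<or> i = 2 \<or> i = 3 \<or> i = 4 \<or> i = 5" by linarith
  then show "E ([x0, x1, x2, x3, x4, x5] ! i) ([x0, x1, x2, x3, x4, x5] ! ((i + 1) mod 6))"
    using assms by (elim disjE) (simp_all add: numeral_2_eq_2)
qed
lemma no_odd3:
  assumes cross: "\<forall>x y. E x y \<longrightarrow> (x\<in>A \<and> y\<in>B) \<or> (x\<in>B \<and> y\<in>A)" and d: "A \<inter> B = {}"
  shows "\<not> has_cycle_of_length V E 3"
proof
  have c: "\<And>x y. E x y \<Longrightarrow> (x \<in> A \<longleftrightarrow> y \<notin> A)" using cross d by blast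
  assume "has_cycle_of_length V E 3"
  then obtain xs where h: "\<forall>i<3. E (xs ! i) (xs ! ((i + 1) mod 3))"
    unfolding has_cycle_of_length_def by blast
  have "E (xs!0) (xs!1)" using h[rule_format, of 0] by simp
  moreover have "E (xs!1) (xs!2)" using h[rule_format, of 1] by (simp add: numeral_2_eq_2)
  moreover have "E (xs!2) (xs!0)" using h[rule_format, of 2] by simp
  ultimately show False using c by metis
qed
lemma no_odd5:
  assumes cross: "\<forall>x y. E x y \<longrightarrow> (x\<in>A \<and> y\<in>B) \<or> (x\<in>B \<and> y\<in>A)" and d: "A \<inter> B = {}"
  shows "\<not> has_cycle_of_length V E 5"
proof
  have c: "\<And>x y. E x y \<Longrightarrow> (x \<in> A \<longleftrightarrow> y \<notin> A)" using cross d by blast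
  assume "has_cycle_of_length V E 5"
  then obtain xs where h: "\<forall>i<5. E (xs ! i) (xs ! ((i + 1) mod 5))"
    unfolding has_cycle_of_length_def by blast
  have "E (xs!0) (xs!1)" using h[rule_format, of 0] by simp
  moreover have "E (xs!1) (xs!2)" using h[rule_format, of 1] by (simp add: numeral_2_eq_2)
  moreover have "E (xs!2) (xs!3)" using h[rule_format, of 2] by simp
  moreover have "E (xs!3) (xs!4)" using h[rule_format, of 3] by simp
  moreover have "E (xs!4) (xs!0)" using h[rule_format, of 4] by simp
  ultimately show False using c by metis
qed
lemma bb_count:
  assumes sg: "simple_graph V E" and AB: "A \<union> B = V" "A \<inter> B = {}"
    and cross: "\<forall>x y. E x y \<longrightarrow> (x\<in>A \<and> y\<in>B) \<or> (x\<in>B \<and> y\<in>A)"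
    and dA: "\<forall>x\<in>A. degree V E x = a" and dB: "\<forall>x\<in>B. degree V E x = b"
  shows "card A * a = card B * b"
proof -
  have finV: "finite V" and sym: "\<And>x y. E x y \<Longrightarrow> E y x" and inV: "\<And>x y. E x y \<Longrightarrow> x \<in> V \<and> y \<in> V"
    using sg unfolding simple_graph_def by auto
  have finA: "finite A" "finite B" using finV AB by (auto intro: finite_subset)
  define R where "R = {(x,y). x\<in>A \<and> y\<in>B \<and> E x y}"
  have s1: "Sigma A (\<lambda>x. {y\<in>V. E x y}) = R" using cross AB unfolding R_def by blast
  have s2: "Sigma B (\<lambda>x. {y\<in>V. E x y}) = prod.swap ` R"
  proof (rule set_eqI)
    fix z :: "'a \<times> 'a" obtain u w where z: "z = (u,w)" by fastforce
    have "z \<in> Sigma B (\<lambda>x. {y\<in>V. E x y}) \<longleftrightarrow> u \<in> B \<and> w \<in> A \<and> E u w"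
      using cross AB inV unfolding z by blast
    also have "\<dots> \<longleftrightarrow> (w,u) \<in> R" unfolding R_def using sym by blast
    also have "\<dots> \<longleftrightarrow> z \<in> prod.swap ` R" unfolding z by (simp add: image_iff) force
    finally show "z \<in> Sigma B (\<lambda>x. {y\<in>V. E x y}) \<longleftrightarrow> z \<in> prod.swap ` R" .
  qed
  have "card A * a = (\<Sum>x\<in>A. card {y\<in>V. E x y})" using dA unfolding degree_def by simp
  also have "\<dots> = card R" unfolding s1[symmetric] by (rule card_SigmaI[symmetric]) (use finA finV in auto)
  also have "\<dots> = card (prod.swap ` R)" by (simp add: card_image)
  also have "\<dots> = (\<Sum>x\<in>B. card {y\<in>V. E x y})" unfolding s2[symmetric] by (rule card_SigmaI) (use finA finV in auto)
  also have "\<dots> = card B * b" using dB unfolding degree_def by simp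
  finally show ?thesis .
qed

lemma arith_bound:
  fixes m n b a :: nat
  assumes m3: "3 \<le> m" and dvd: "m dvd n + 1" and cnt: "a * m = b * n"
    and lb: "1 + n * (m - 1) \<le> b"
  shows "(n + 1) * (m - 1) \<le> b"
proof -
  have cop: "coprime m n"
  proof (rule coprimeI)
    fix d assume "d dvd m" "d dvd n"
    then have "d dvd n + 1" "d dvd n" using dvd dvd_trans by blast+
    then have "d dvd 1" using dvd_add_right_iff by blast
    then show "is_unit d" by simp
  qed
  have "m dvd b * n" using cnt by (metis dvd_triv_right)
  then have "m dvd b" using cop by (simp add: coprime_dvd_mult_left_iff)
  then obtain t where t: "b = m * t" by blast
  obtain s where s: "n + 1 = m * s" using dvd by blast
  have e1: "int (n * (m - 1)) = int n * (int m - 1)" using m3 by (simp add: of_nat_diff)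
  have l1: "int (1 + n * (m - 1)) \<le> int b" using lb by (simp only: of_nat_le_iff)
  have l2: "int b = int m * int t" using t by simp
  have ints: "int m * int t \<ge> 1 + int n * (int m - 1)" using l1 l2 m3 by (simp add: of_nat_diff)
  have s': "int n + 1 = int m * int s" using arg_cong[OF s, of int] by simp
  define X where "X = int t - (int n - int s)"
  have ex: "int m * X = int m * int t - int m * int n + int m * int s" unfolding X_def by (simp add: algebra_simps)
  have e2: "int n * (int m - 1) = int m * int n - int n" by (simp add: algebra_simps)
  have "int m * X \<ge> 2" using ints s' ex e2 by linarith
  have "X > 0"
  proof (rule ccontr)
    assume "\<not> X > 0"
    then have "int m * X \<le> 0" by (intro mult_nonneg_nonpos) auto
    then show False using \<open>int m * X \<ge> 2\<close> by linarith
  qed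
  then have "int m * X \<ge> int m * 1" by (intro mult_left_mono) auto
  then have "int b \<ge> (int n + 1) * (int m - 1)" 
  proof -
    have e3: "(int n + 1) * (int m - 1) = int m * int n + int m - int n - 1" by (simp add: algebra_simps)
    show ?thesis using \<open>int m * X \<ge> int m * 1\<close> l2 s' ex e3 by linarith
  qed
  moreover have "int ((n + 1) * (m - 1)) = (int n + 1) * (int m - 1)" 
  proof -
    have "int (m - 1) = int m - 1" using m3 by auto
    then show ?thesis by (simp only: of_nat_mult of_nat_add of_nat_1)
  qed
  ultimately show ?thesis by linarith
qed
lemma part1:
  fixes V :: "'a set"
  assumes m3: "3 \<le> m" and dvd: "m dvd n + 1" and bb: "bipartite_biregular m n 6 V E"
  shows "real (card V) \<ge> (real n / real m + 1) * (real n + 1) * (real m - 1)"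
proof -
  from bb obtain A B where sg: "simple_graph V E" and AB: "A \<union> B = V" "A \<inter> B = {}"
    and cross: "\<forall>x y. E x y \<longrightarrow> (x\<in>A \<and> y\<in>B) \<or> (x\<in>B \<and> y\<in>A)"
    and dA: "\<forall>x\<in>A. degree V E x = m" and dB: "\<forall>x\<in>B. degree V E x = n"
    and gir: "has_girth V E 6"
    unfolding bipartite_biregular_def by blast
  have finV: "finite V" and sym: "\<And>x y. E x y \<Longrightarrow> E y x" and inV: "\<And>x y. E x y \<Longrightarrow> x \<in> V \<and> y \<in> V"
    using sg unfolding simple_graph_def by auto
  have finA: "finite A" "finite B" using finV AB by (auto intro: finite_subset)
  have no4: "\<not> has_cycle_of_length V E 4" using gir unfolding has_girth_def by auto
  obtain xs where h6: "\<forall>i<6. E (xs!i) (xs!((i+1) mod 6))"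
    using gir unfolding has_girth_def has_cycle_of_length_def by blast
  have "E (xs!0) (xs!1)" using h6[rule_format, of 0] by simp
  then obtain b where bB: "b \<in> B" using cross by blast
  have bV: "b \<in> V" using bB AB by blast
  define N where "N = {y\<in>V. E b y}"
  have cardN: "card N = n" using dB bB unfolding degree_def N_def by auto
  have NA: "N \<subseteq> A" using cross AB bB unfolding N_def by blast
  have finN: "finite N" using finV unfolding N_def by simp
  define S where "S a = {y\<in>V. E a y} - {b}" for a
  have cardS: "card (S a) = m - 1" if "a \<in> N" for a
  proof -
    have "a \<in> A" using that NA by blast
    then have "card {y\<in>V. E a y} = m" using dA unfolding degree_def by auto
    moreover have "b \<in> {y\<in>V. E a y}" using that sym bV unfolding N_def by auto
    ultimately show ?thesis unfolding S_def using finV by (simp add: card_Diff_singleton)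
  qed
  have SB: "S a \<subseteq> B" if "a \<in> N" for a
    using that NA cross AB unfolding S_def by blast
  have disj: "S a1 \<inter> S a2 = {}" if a: "a1 \<in> N" "a2 \<in> N" "a1 \<noteq> a2" for a1 a2
  proof (rule ccontr)
    assume "S a1 \<inter> S a2 \<noteq> {}"
    then obtain c where c: "c \<in> V" "E a1 c" "E a2 c" "c \<noteq> b" unfolding S_def by blast
    have a1: "a1 \<in> A" "a2 \<in> A" "E b a1" "E b a2" "a1 \<in> V" "a2 \<in> V" using a NA unfolding N_def by auto
    have cB: "c \<in> B" using c(2) a1(1) cross AB by blast
    have ne: "b \<noteq> a1" "b \<noteq> a2" "a1 \<noteq> c" "a2 \<noteq> c" using a1(1,2) bB cB AB(2) by blast+
    have "distinct [b, a1, c, a2]" using ne a(3) c(4) by simp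
    moreover have "\<forall>i<4. E ([b, a1, c, a2] ! i) ([b, a1, c, a2] ! ((i + 1) mod 4))"
      by (rule cyc4) (use a1 c sym in blast)+
    moreover have "set [b, a1, c, a2] \<subseteq> V" using bV c(1) a1(5,6) by simp
    ultimately have "has_cycle_of_length V E 4"
      unfolding has_cycle_of_length_def by (intro conjI exI[of _ "[b, a1, c, a2]"]) auto
    then show False using no4 by simp
  qed
  have cardU: "card (\<Union>(S ` N)) = n * (m - 1)"
  proof -
    have "card (\<Union>(S ` N)) = (\<Sum>a\<in>N. card (S a))"
      by (rule card_UN_disjoint) (use finN finV disj in \<open>auto simp: S_def\<close>)
    also have "\<dots> = n * (m - 1)" using cardS cardN by simp
    finally show ?thesis .
  qed
  have sub: "insert b (\<Union>(S ` N)) \<subseteq> B" using bB SB by blast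
  have "b \<notin> \<Union>(S ` N)" unfolding S_def by blast
  moreover have finU: "finite (\<Union>(S ` N))" using sub finA(2) by (meson finite_insert finite_subset)
  ultimately have "card (insert b (\<Union>(S ` N))) = 1 + n * (m - 1)"
    using cardU by (simp add: card_insert_disjoint)
  then have lb: "1 + n * (m - 1) \<le> card B" using card_mono[OF finA(2) sub] by simp
  have cnt: "card A * m = card B * n" by (rule bb_count[OF sg AB cross dA dB])
  have bnd: "(n + 1) * (m - 1) \<le> card B" by (rule arith_bound[OF m3 dvd cnt lb])
  have cV: "card V = card A + card B" using AB finA by (metis card_Un_disjoint)
  have mpos: "real m > 0" using m3 by simp
  have "real (card A) * real m = real (card B) * real n"
    using arg_cong[OF cnt, of real] by (simp only: of_nat_mult)
  then have rA: "real (card A) = real (card B) * real n / real m"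
    using mpos by (simp add: field_simps)
  have "real (card V) = real (card B) * (real n / real m + 1)"
    using cV rA by (simp add: field_simps)
  moreover have "real (card B) \<ge> (real n + 1) * (real m - 1)"
  proof -
    have "real ((n + 1) * (m - 1)) \<le> real (card B)" using bnd by (simp only: of_nat_le_iff)
    moreover have "real (m - 1) = real m - 1" using m3 by auto
    ultimately show ?thesis by (simp only: of_nat_mult of_nat_add of_nat_1)
  qed
  moreover have "real n / real m + 1 \<ge> 0" by simp
  ultimately have fin1: "(real n + 1) * (real m - 1) * (real n / real m + 1) \<le> real (card V)"
    by (simp add: mult_right_mono)
  have fin2: "(real n / real m + 1) * (real n + 1) * (real m - 1) = (real n + 1) * (real m - 1) * (real n / real m + 1)"
    by (simp only: mult.commute mult.left_commute)
  show ?thesis by (rule ord_eq_le_trans[OF fin2 fin1])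
qed



lemma bb_transfer:
  assumes bb: "bipartite_biregular a b g V E" and inj: "inj_on f V"
  shows "bipartite_biregular a b g (f ` V)
           (\<lambda>u w. u \<in> f ` V \<and> w \<in> f ` V \<and> E (inv_into V f u) (inv_into V f w))"
    (is "bipartite_biregular a b g ?W ?F")
proof -
  define h where "h = inv_into V f"
  from bb obtain A B where sg: "simple_graph V E" and AB: "A \<union> B = V" "A \<inter> B = {}"
    and cross: "\<forall>x y. E x y \<longrightarrow> (x\<in>A \<and> y\<in>B) \<or> (x\<in>B \<and> y\<in>A)"
    and dA: "\<forall>x\<in>A. degree V E x = a" and dB: "\<forall>x\<in>B. degree V E x = b"
    and gir: "has_girth V E g"
    unfolding bipartite_biregular_def by blast
  have finV: "finite V" and sym: "\<And>x y. E x y \<Longrightarrow> E y x" and inV: "\<And>x y. E x y \<Longrightarrow> x \<in> V \<and> y \<in> V"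
    and irr: "\<And>x. \<not> E x x"
    using sg unfolding simple_graph_def by auto
  have hf: "\<And>x. x \<in> V \<Longrightarrow> h (f x) = x" unfolding h_def using inj by (simp add: inv_into_f_f)
  have hV: "\<And>u. u \<in> ?W \<Longrightarrow> h u \<in> V" unfolding h_def by (auto simp: inv_into_into)
  have fh: "\<And>u. u \<in> ?W \<Longrightarrow> f (h u) = u" unfolding h_def by (auto simp: f_inv_into_f)
  have Fiff: "\<And>x y. x \<in> V \<Longrightarrow> y \<in> V \<Longrightarrow> ?F (f x) (f y) \<longleftrightarrow> E x y"
    using hf h_def by auto
  have sg': "simple_graph ?W ?F"
    unfolding simple_graph_def using finV sym irr by (auto simp: h_def)
  have cyc: "has_cycle_of_length ?W ?F k \<longleftrightarrow> has_cycle_of_length V E k" for k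
  proof
    assume "has_cycle_of_length ?W ?F k"
    then obtain xs where xs: "3 \<le> k" "length xs = k" "distinct xs" "set xs \<subseteq> ?W"
      "\<forall>i<k. ?F (xs ! i) (xs ! ((i + 1) mod k))" unfolding has_cycle_of_length_def by blast
    have "inj_on h ?W" unfolding h_def by (rule inj_on_inv_into) simp
    then have "distinct (map h xs)" using xs by (simp add: distinct_map inj_on_subset)
    moreover have "set (map h xs) \<subseteq> V" using xs hV by auto
    moreover have "\<forall>i<k. E (map h xs ! i) (map h xs ! ((i + 1) mod k))"
      using xs by (auto simp: h_def)
    ultimately show "has_cycle_of_length V E k" unfolding has_cycle_of_length_def using xs
      by (intro conjI exI[of _ "map h xs"]) auto
  next
    assume "has_cycle_of_length V E k"
    then obtain xs where xs: "3 \<le> k" "length xs = k" "distinct xs" "set xs \<subseteq> V"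
      "\<forall>i<k. E (xs ! i) (xs ! ((i + 1) mod k))" unfolding has_cycle_of_length_def by blast
    have "distinct (map f xs)" using xs inj by (simp add: distinct_map inj_on_subset)
    moreover have "set (map f xs) \<subseteq> ?W" using xs by auto
    moreover have "\<forall>i<k. ?F (map f xs ! i) (map f xs ! ((i + 1) mod k))"
    proof (intro allI impI)
      fix i assume i: "i < k"
      have "xs ! i \<in> V" "xs ! ((i + 1) mod k) \<in> V" 
      proof -
        have "(i + 1) mod k < k" using xs(1) by simp
        then show "xs ! i \<in> V" "xs ! ((i + 1) mod k) \<in> V" using xs(2,4) i nth_mem by blast+
      qed
      then show "?F (map f xs ! i) (map f xs ! ((i + 1) mod k))"
        using Fiff xs i by (simp add: mod_less_divisor)
    qed
    ultimately show "has_cycle_of_length ?W ?F k" unfolding has_cycle_of_length_def using xs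
      by (intro conjI exI[of _ "map f xs"]) auto
  qed
  have deg: "degree ?W ?F (f x) = degree V E x" if "x \<in> V" for x
  proof -
    have "{w \<in> ?W. ?F (f x) w} = f ` {y \<in> V. E x y}" using Fiff that by auto
    then show ?thesis unfolding degree_def using inj
      by (simp add: card_image inj_on_subset)
  qed
  have "A \<union> B = V" by fact
  have ex: "\<exists>A' B'. A' \<union> B' = ?W \<and> A' \<inter> B' = {} \<and>
        (\<forall>x y. ?F x y \<longrightarrow> (x \<in> A' \<and> y \<in> B') \<or> (x \<in> B' \<and> y \<in> A')) \<and>
        (\<forall>x\<in>A'. degree ?W ?F x = a) \<and> (\<forall>x\<in>B'. degree ?W ?F x = b)"
  proof (rule exI[of _ "f ` A"], rule exI[of _ "f ` B"], intro conjI)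
    show "f ` A \<union> f ` B = ?W" using AB by auto
    show "f ` A \<inter> f ` B = {}" 
    proof -
      have "f ` A \<inter> f ` B = f ` (A \<inter> B)" by (rule inj_on_image_Int[symmetric, OF inj]) (use AB in auto)
      then show ?thesis using AB by simp
    qed
    show "\<forall>x y. ?F x y \<longrightarrow> x \<in> f ` A \<and> y \<in> f ` B \<or> x \<in> f ` B \<and> y \<in> f ` A"
    proof (intro allI impI)
      fix u w assume F: "?F u w"
      then have uw: "u \<in> f ` V" "w \<in> f ` V" by simp_all
      obtain x where x: "x \<in> V" "u = f x" using uw(1) by (rule imageE) auto
      obtain y where y: "y \<in> V" "w = f y" using uw(2) by (rule imageE) auto
      have "E x y" using F x y hf unfolding h_def by simp
      then have "(x\<in>A \<and> y\<in>B) \<or> (x\<in>B \<and> y\<in>A)" using cross by simp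
      then show "u \<in> f ` A \<and> w \<in> f ` B \<or> u \<in> f ` B \<and> w \<in> f ` A"
        using x(2) y(2) by auto
    qed
    show "\<forall>x\<in>f ` A. degree ?W ?F x = a" using dA deg AB by auto
    show "\<forall>x\<in>f ` B. degree ?W ?F x = b" using dB deg AB by auto
  qed
  have gg: "has_girth ?W ?F g" using gir cyc unfolding has_girth_def by simp
  show ?thesis unfolding bipartite_biregular_def by (intro conjI sg' ex gg)
qed



lemma part2:
  fixes P :: "'p set" and Bl :: "'p set set"
  assumes m3: "3 \<le> m" and mn: "m \<le> n" and dvd: "m dvd n + 1"
    and st: "steiner_system_2 m (n * (m - 1) + m) P Bl" and pP: "p \<in> P"
  shows "bipartite_biregular m n 6 (inc_vertices (P - {p}) {B \<in> Bl. p \<notin> B})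
            (inc_edges (P - {p}) {B \<in> Bl. p \<notin> B})
       \<and> real (card (inc_vertices (P - {p}) {B \<in> Bl. p \<notin> B}))
            = (real n / real m + 1) * (real n + 1) * (real m - 1)"
proof -
  define P' where "P' = P - {p}"
  define Bl' where "Bl' = {B \<in> Bl. p \<notin> B}"
  define V' where "V' = inc_vertices P' Bl'"
  define E' where "E' = inc_edges P' Bl'"
  have finP: "finite P" and cP: "card P = n * (m - 1) + m" and blk: "\<And>B. B \<in> Bl \<Longrightarrow> B \<subseteq> P"
    and blkc: "\<And>B. B \<in> Bl \<Longrightarrow> card B = m"
    and uniq: "\<And>x y. x \<in> P \<Longrightarrow> y \<in> P \<Longrightarrow> x \<noteq> y \<Longrightarrow> \<exists>!B. B \<in> Bl \<and> x \<in> B \<and> y \<in> B"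
    using st unfolding steiner_system_2_def by auto
  have ex2: "\<exists>B. B \<in> Bl \<and> x \<in> B \<and> y \<in> B" if "x \<in> P" "y \<in> P" "x \<noteq> y" for x y
    using uniq[OF that] by (rule ex1_implies_ex)
  have uniq2: "B1 = B2" if h: "x \<noteq> y" "B1 \<in> Bl" "B2 \<in> Bl" "x \<in> B1" "y \<in> B1" "x \<in> B2" "y \<in> B2"
    for x y B1 B2
  proof -
    have "x \<in> P" "y \<in> P" using h blk by auto
    then have "\<exists>!B. B \<in> Bl \<and> x \<in> B \<and> y \<in> B" using uniq h(1) by simp
    then show "B1 = B2" using h by blast
  qed
  have finBl: "finite Bl"
  proof (rule finite_subset)
    show "Bl \<subseteq> Pow P" using blk by blast
    show "finite (Pow P)" using finP by simp
  qed
  have m1: "m - 1 > 0" using m3 by simp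
  have cPx: "card (P - {x}) = (n + 1) * (m - 1)" if "x \<in> P" for x
  proof -
    have "card (P - {x}) = card P - 1" using that finP by simp
    also have "\<dots> = n * (m - 1) + (m - 1)" using cP m3 by simp
    also have "\<dots> = (n + 1) * (m - 1)" by simp
    finally show ?thesis .
  qed
  have degP: "card {B \<in> Bl. x \<in> B} = n + 1" if x: "x \<in> P" for x
  proof -
    define T where "T = {B \<in> Bl. x \<in> B}"
    have U: "P - {x} = (\<Union>B\<in>T. B - {x})"
    proof
      show "P - {x} \<subseteq> (\<Union>B\<in>T. B - {x})"
      proof
        fix y assume y: "y \<in> P - {x}"
        then obtain B where "B \<in> Bl" "x \<in> B" "y \<in> B" using ex2[of x y] x by auto
        then show "y \<in> (\<Union>B\<in>T. B - {x})" using y unfolding T_def by blast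
      qed
      show "(\<Union>B\<in>T. B - {x}) \<subseteq> P - {x}" using blk unfolding T_def by blast
    qed
    have finT: "finite T" using finBl unfolding T_def by simp
    have "card (\<Union>B\<in>T. B - {x}) = (\<Sum>B\<in>T. card (B - {x}))"
    proof (rule card_UN_disjoint)
      show "finite T" by fact
      show "\<forall>B\<in>T. finite (B - {x})"
      proof
        fix B assume "B \<in> T"
        then have "B \<subseteq> P" using blk unfolding T_def by simp
        then show "finite (B - {x})" using finP finite_subset by blast
      qed
      show "\<forall>B1\<in>T. \<forall>B2\<in>T. B1 \<noteq> B2 \<longrightarrow> (B1 - {x}) \<inter> (B2 - {x}) = {}"
      proof (intro ballI impI)
        fix B1 B2 assume b: "B1 \<in> T" "B2 \<in> T" "B1 \<noteq> B2"
        show "(B1 - {x}) \<inter> (B2 - {x}) = {}"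
        proof (rule ccontr)
          assume "(B1 - {x}) \<inter> (B2 - {x}) \<noteq> {}"
          then obtain y where y: "y \<in> B1" "y \<in> B2" "y \<noteq> x" by blast
          have "B1 \<in> Bl" "B2 \<in> Bl" "x \<in> B1" "x \<in> B2" using b unfolding T_def by auto
          then have "B1 = B2" using uniq2[of y x B1 B2] y by simp
          then show False using b(3) by simp
        qed
      qed
    qed
    also have "\<dots> = (\<Sum>B\<in>T. m - 1)"
    proof (rule sum.cong)
      fix B assume "B \<in> T"
      then have "B \<in> Bl" "x \<in> B" unfolding T_def by auto
      moreover have "finite B" using \<open>B \<in> Bl\<close> blk finP finite_subset by blast
      ultimately show "card (B - {x}) = m - 1" using blkc by simp
    qed simp
    also have "\<dots> = card T * (m - 1)" by simp
    finally have eqn: "card T * (m - 1) = (n + 1) * (m - 1)" using U cPx[OF x] by simp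
    have "card T = n + 1" using eqn m1 by (metis mult_right_cancel not_gr_zero)
    then show ?thesis unfolding T_def .
  qed
  have P'sub: "P' \<subseteq> P" unfolding P'_def by blast
  have finP': "finite P'" using finP unfolding P'_def by simp
  have finBl': "finite Bl'" using finBl unfolding Bl'_def by simp
  have blk': "B \<subseteq> P'" if "B \<in> Bl'" for B using that blk unfolding Bl'_def P'_def by blast
  have degP': "card {B \<in> Bl'. x \<in> B} = n" if x: "x \<in> P'" for x
  proof -
    have xP: "x \<in> P" "x \<noteq> p" using x unfolding P'_def by auto
    obtain L where L: "L \<in> Bl" "x \<in> L" "p \<in> L" using ex2[of x p] xP pP by auto
    have eq: "{B \<in> Bl'. x \<in> B} = {B \<in> Bl. x \<in> B} - {L}"
    proof (rule set_eqI)
      fix B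
      show "B \<in> {B \<in> Bl'. x \<in> B} \<longleftrightarrow> B \<in> {B \<in> Bl. x \<in> B} - {L}"
      proof
        assume "B \<in> {B \<in> Bl'. x \<in> B}"
        then show "B \<in> {B \<in> Bl. x \<in> B} - {L}" using L unfolding Bl'_def by auto
      next
        assume B: "B \<in> {B \<in> Bl. x \<in> B} - {L}"
        have "p \<notin> B"
        proof
          assume "p \<in> B"
          then have "B = L" using uniq2[of x p B L] B L xP by simp
          then show False using B by simp
        qed
        then show "B \<in> {B \<in> Bl'. x \<in> B}" using B unfolding Bl'_def by simp
      qed
    qed
    have "card ({B \<in> Bl. x \<in> B} - {L}) = n" using degP[OF xP(1)] L finBl by (simp add: card_Diff_singleton)
    then show ?thesis using eq by simp
  qed
  have Es: "\<And>x B. E' (Inl x) (Inr B) \<longleftrightarrow> x \<in> P' \<and> B \<in> Bl' \<and> x \<in> B"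
    "\<And>x B. E' (Inr B) (Inl x) \<longleftrightarrow> x \<in> P' \<and> B \<in> Bl' \<and> x \<in> B"
    "\<And>x y. \<not> E' (Inl x) (Inl y)" "\<And>B C. \<not> E' (Inr B) (Inr C)"
    unfolding E'_def inc_edges_def by auto
  have Ecases: "\<And>u w. E' u w \<Longrightarrow> (\<exists>x B. u = Inl x \<and> w = Inr B \<and> x \<in> P' \<and> B \<in> Bl' \<and> x \<in> B)
        \<or> (\<exists>x B. u = Inr B \<and> w = Inl x \<and> x \<in> P' \<and> B \<in> Bl' \<and> x \<in> B)"
    unfolding E'_def inc_edges_def by blast
  have sg: "simple_graph V' E'"
    unfolding simple_graph_def
  proof (intro conjI allI impI)
    show "finite V'" unfolding V'_def inc_vertices_def using finP' finBl' by simp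
    fix x y
    show "E' x y \<Longrightarrow> x \<in> V'" "E' x y \<Longrightarrow> y \<in> V'" "E' x y \<Longrightarrow> E' y x"
      unfolding V'_def inc_vertices_def E'_def inc_edges_def by auto
    show "\<not> E' x x" unfolding E'_def inc_edges_def by auto
  qed
  define A :: "('p + 'p set) set" where "A = Inr ` Bl'"
  define B :: "('p + 'p set) set" where "B = Inl ` P'"
  have AB: "A \<union> B = V'" "A \<inter> B = {}" unfolding A_def B_def V'_def inc_vertices_def by auto
  have cross: "\<forall>x y. E' x y \<longrightarrow> (x \<in> A \<and> y \<in> B) \<or> (x \<in> B \<and> y \<in> A)"
    unfolding E'_def inc_edges_def A_def B_def by auto
  have dA: "\<forall>x\<in>A. degree V' E' x = m"
  proof
    fix u assume "u \<in> A"
    then obtain C where C: "u = Inr C" "C \<in> Bl'" unfolding A_def by blast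
    have "{w \<in> V'. E' u w} = Inl ` C"
    proof (rule set_eqI)
      fix w show "w \<in> {w \<in> V'. E' u w} \<longleftrightarrow> w \<in> Inl ` C"
        using C blk'[OF C(2)] by (cases w) (auto simp: Es V'_def inc_vertices_def)
    qed
    moreover have "card C = m" using C(2) blkc unfolding Bl'_def by simp
    ultimately show "degree V' E' u = m" unfolding degree_def by (simp add: card_image)
  qed
  have dB: "\<forall>x\<in>B. degree V' E' x = n"
  proof
    fix u assume "u \<in> B"
    then obtain x where x: "u = Inl x" "x \<in> P'" unfolding B_def by blast
    have "{w \<in> V'. E' u w} = Inr ` {C \<in> Bl'. x \<in> C}"
    proof (rule set_eqI)
      fix w show "w \<in> {w \<in> V'. E' u w} \<longleftrightarrow> w \<in> Inr ` {C \<in> Bl'. x \<in> C}"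
        using x by (cases w) (auto simp: Es V'_def inc_vertices_def)
    qed
    then show "degree V' E' u = n" unfolding degree_def using degP'[OF x(2)] by (simp add: card_image)
  qed
  have key: "False" if "a \<noteq> c" "B1 \<noteq> B2" "B1 \<in> Bl'" "B2 \<in> Bl'" "a \<in> B1" "c \<in> B1" "a \<in> B2" "c \<in> B2"
    for a c B1 B2
  proof -
    have "B1 \<in> Bl" "B2 \<in> Bl" using that(3,4) unfolding Bl'_def by auto
    then show False using uniq2[of a c B1 B2] that(1,2,5-8) by simp
  qed
  have no4: "\<not> has_cycle_of_length V' E' 4"
  proof
    assume "has_cycle_of_length V' E' 4"
    then obtain xs where xs: "length xs = 4" "distinct xs" "\<forall>i<4. E' (xs ! i) (xs ! ((i + 1) mod 4))"
      unfolding has_cycle_of_length_def by blast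
    have e1: "E' (xs!0) (xs!1)" using xs(3)[rule_format, of 0] by simp
    have e2: "E' (xs!1) (xs!2)" using xs(3)[rule_format, of 1] by (simp add: numeral_2_eq_2)
    have e3: "E' (xs!2) (xs!3)" using xs(3)[rule_format, of 2] by simp
    have e4: "E' (xs!3) (xs!0)" using xs(3)[rule_format, of 3] by simp
    note e = e1 e2 e3 e4
    have d: "xs!0 \<noteq> xs!2" "xs!1 \<noteq> xs!3" using xs(1,2) by (simp_all add: nth_eq_iff_index_eq)
    show False
    proof (cases "xs!0")
      case (Inl a)
      from Ecases[OF e(1)] Inl obtain B1 where b1: "xs!1 = Inr B1" by auto
      from Ecases[OF e(2)] b1 obtain c where c: "xs!2 = Inl c" by auto
      from Ecases[OF e(3)] c obtain B2 where b2: "xs!3 = Inr B2" by auto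
      have f: "a \<in> B1" "B1 \<in> Bl'" "c \<in> B1" "c \<in> B2" "B2 \<in> Bl'" "a \<in> B2"
        using e unfolding Inl b1 c b2 by (simp_all add: Es)
      have ne: "a \<noteq> c" "B1 \<noteq> B2" using d unfolding Inl b1 c b2 by simp_all
      show False by (rule key[of a c B1 B2]) (use f ne in simp_all)
    next
      case (Inr B1)
      from Ecases[OF e(1)] Inr obtain a where a: "xs!1 = Inl a" by auto
      from Ecases[OF e(2)] a obtain B2 where b2: "xs!2 = Inr B2" by auto
      from Ecases[OF e(3)] b2 obtain c where c: "xs!3 = Inl c" by auto
      have f: "a \<in> B1" "B1 \<in> Bl'" "a \<in> B2" "c \<in> B2" "B2 \<in> Bl'" "c \<in> B1"
        using e unfolding Inr a c b2 by (simp_all add: Es)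
      have ne: "a \<noteq> c" "B1 \<noteq> B2" using d unfolding Inr a c b2 by simp_all
      show False by (rule key[of a c B1 B2]) (use f ne in simp_all)
    qed
  qed
  have n5: "n \<ge> 5"
  proof -
    obtain s where s: "n + 1 = m * s" using dvd by blast
    have "s \<noteq> 0" using s by (metis add_is_0 mult_0_right one_neq_zero)
    moreover have "s \<noteq> 1" using s mn by auto
    ultimately have "s \<ge> 2" by simp
    then have "m * s \<ge> m * 2" by simp
    then show ?thesis using s m3 by linarith
  qed
  have cyc6: "has_cycle_of_length V' E' 6"
  proof -
    have "card P' = (n + 1) * (m - 1)" using cPx[OF pP] unfolding P'_def .
    then have "card P' > 0" using m1 by simp
    then obtain x where x: "x \<in> P'" by (metis card.empty less_irrefl equals0I)
    have xP: "x \<in> P" "x \<noteq> p" using x unfolding P'_def by auto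
    have "card {C \<in> Bl'. x \<in> C} > 0" using degP'[OF x] n5 by simp
    then obtain B1 where B1: "B1 \<in> Bl'" "x \<in> B1" by (metis (no_types, lifting) card.empty less_irrefl equals0I mem_Collect_eq)
    have B1P: "B1 \<subseteq> P" using B1 blk unfolding Bl'_def by simp
    have finB1: "finite B1" using B1P finP finite_subset by blast
    have cB1: "card B1 = m" using B1 blkc unfolding Bl'_def by simp
    have "card (B1 - {x}) > 0" using finB1 cB1 B1(2) m3 by simp
    then obtain y where y: "y \<in> B1" "y \<noteq> x" by (metis card.empty less_irrefl equals0I Diff_iff singletonI)
    have yP: "y \<in> P" "y \<noteq> p" using y B1 B1P unfolding Bl'_def by auto
    obtain Lx where Lx: "Lx \<in> Bl" "x \<in> Lx" "p \<in> Lx" using ex2[of x p] xP pP by auto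
    obtain Ly where Ly: "Ly \<in> Bl" "y \<in> Ly" "p \<in> Ly" using ex2[of y p] yP pP by auto
    define X where "X = B1 \<union> Lx \<union> Ly \<union> {p}"
    have "finite Lx" using blk[OF Lx(1)] finP by (rule finite_subset)
    moreover have "finite Ly" using blk[OF Ly(1)] finP by (rule finite_subset)
    ultimately have finX: "finite X" unfolding X_def using finB1 by simp
    have "card X \<le> card B1 + card Lx + card Ly + card {p}" unfolding X_def
      by (meson card_Un_le le_trans add_le_mono order_refl)
    then have cX: "card X \<le> 3 * m + 1" using cB1 blkc Lx Ly by simp
    have "n * (m - 1) \<ge> 5 * (m - 1)" using n5 by (rule mult_right_mono) simp
    then have "card P \<ge> 6 * m - 5" using cP m3 by arith
    then have "card P > card X" using cX m3 by linarith
    then have "\<not> P \<subseteq> X"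
    proof (intro notI)
      assume "card X < card P" "P \<subseteq> X"
      then show False using card_mono[OF finX, of P] by simp
    qed
    then obtain z where z: "z \<in> P" "z \<notin> X" by blast
    have zn: "z \<notin> B1" "z \<notin> Lx" "z \<notin> Ly" "z \<noteq> p" using z unfolding X_def by auto
    have zx: "z \<noteq> x" "z \<noteq> y" using zn B1 y by auto
    obtain Bxz where Bxz: "Bxz \<in> Bl" "x \<in> Bxz" "z \<in> Bxz" using ex2[of x z] xP z zx by auto
    obtain Byz where Byz: "Byz \<in> Bl" "y \<in> Byz" "z \<in> Byz" using ex2[of y z] yP z zx by auto
    have pxz: "p \<notin> Bxz"
    proof
      assume "p \<in> Bxz"
      then have "Bxz = Lx" using uniq2[of x p Bxz Lx] Bxz Lx xP by simp
      then show False using Bxz zn by simp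
    qed
    have pyz: "p \<notin> Byz"
    proof
      assume "p \<in> Byz"
      then have "Byz = Ly" using uniq2[of y p Byz Ly] Byz Ly yP by simp
      then show False using Byz zn by simp
    qed
    have Bxz': "Bxz \<in> Bl'" and Byz': "Byz \<in> Bl'" using Bxz Byz pxz pyz unfolding Bl'_def by auto
    have xP': "x \<in> P'" and yP': "y \<in> P'" and zP': "z \<in> P'" using x yP z zn unfolding P'_def by auto
    have dB1: "B1 \<noteq> Byz" "B1 \<noteq> Bxz" using Byz Bxz zn by auto
    have dB2: "Byz \<noteq> Bxz"
    proof
      assume "Byz = Bxz"
      have B1Bl: "B1 \<in> Bl" using B1(1) unfolding Bl'_def by simp
      have "x \<in> Byz" using Bxz(2) \<open>Byz = Bxz\<close> by simp
      then have "Byz = B1" using uniq2[of x y Byz B1] Byz(1,2) B1Bl B1(2) y by simp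
      then show False using dB1 by simp
    qed
    let ?xs = "[Inl x, Inr B1, Inl y, Inr Byz, Inl z, Inr Bxz]"
    have "distinct ?xs" using y(2) zx dB1 dB2 by (simp add: eq_commute)
    moreover have "set ?xs \<subseteq> V'" using xP' yP' zP' B1 Bxz' Byz' unfolding V'_def inc_vertices_def by auto
    moreover have "\<forall>i<6. E' (?xs ! i) (?xs ! ((i + 1) mod 6))"
      by (rule cyc6) (simp_all add: Es xP' yP' zP' B1 Bxz' Byz' y Byz Bxz)
    ultimately show ?thesis unfolding has_cycle_of_length_def
      by (intro conjI exI[of _ ?xs]) simp_all
  qed
  have gir: "has_girth V' E' 6"
    unfolding has_girth_def
  proof (intro conjI allI impI cyc6)
    fix k :: nat assume "k < 6"
    then have "k < 3 \<or> k = 3 \<or> k = 4 \<or> k = 5" by linarith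
    then show "\<not> has_cycle_of_length V' E' k"
      using no_odd3[OF cross AB(2)] no_odd5[OF cross AB(2)] no4
      unfolding has_cycle_of_length_def by auto
  qed
  have bb: "bipartite_biregular m n 6 V' E'"
    unfolding bipartite_biregular_def
    apply (intro conjI sg gir)
    apply (rule exI[of _ A], rule exI[of _ B])
    by (intro conjI AB cross dA dB)
  have cnt: "card A * m = card B * n" by (rule bb_count[OF sg AB cross dA dB])
  have cA: "card A = card Bl'" unfolding A_def by (simp add: card_image)
  have cB: "card B = (n + 1) * (m - 1)" unfolding B_def using cPx[OF pP] by (simp add: card_image P'_def)
  have cV: "card V' = card A + card B" using AB finP' finBl' unfolding A_def B_def
    by (metis card_Un_disjoint finite_imageI)
  have mpos: "real m > 0" using m3 by simp
  have rB: "real (card B) = (real n + 1) * (real m - 1)"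
  proof -
    have "real (m - 1) = real m - 1" using m3 by auto
    then show ?thesis using cB by (simp only: of_nat_mult of_nat_add of_nat_1)
  qed
  have "real (card A) * real m = real (card B) * real n"
    using arg_cong[OF cnt, of real] by (simp only: of_nat_mult)
  then have rA: "real (card A) = real (card B) * real n / real m"
    using mpos by (simp add: field_simps)
  have "real (card V') = real (card B) * (real n / real m + 1)"
    using cV rA by (simp add: field_simps)
  also have "\<dots> = (real n / real m + 1) * (real n + 1) * (real m - 1)"
    unfolding rB by (simp only: mult.commute mult.left_commute)
  finally show ?thesis using bb unfolding V'_def E'_def P'_def Bl'_def by simp
qed


lemma bb_finite: "bipartite_biregular a b g V E \<Longrightarrow> finite V"
  unfolding bipartite_biregular_def simple_graph_def by blast

theorem mainTheorem1:
  fixes m n :: nat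
  assumes "3 \<le> m" and "m \<le> n" and "[int n = -1] (mod int m)"
  shows "(\<forall>(V :: 'a set) E. bipartite_biregular m n 6 V E \<longrightarrow>
            real (card V) \<ge> (real n / real m + 1) * (real n + 1) * (real m - 1))
       \<and> (\<forall>(P :: 'p set) Bl p. steiner_system_2 m (n * (m - 1) + m) P Bl \<and> p \<in> P \<longrightarrow>
            bipartite_biregular m n 6 (inc_vertices (del_points P p) (del_blocks Bl p))
                                      (inc_edges (del_points P p) (del_blocks Bl p))
          \<and> real (card (inc_vertices (del_points P p) (del_blocks Bl p)))
              = (real n / real m + 1) * (real n + 1) * (real m - 1)
          \<and> is_bb_cage m n 6 (inc_vertices (del_points P p) (del_blocks Bl p))
                             (inc_edges (del_points P p) (del_blocks Bl p))
          \<and> real (Bc m n 6) = (real n / real m + 1) * (real n + 1) * (real m - 1))"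
proof -
  have "int m dvd int n - (-1)" using assms(3) by (simp only: cong_iff_dvd_diff)
  then have "int m dvd int (n + 1)" by (simp add: add.commute)
  then have dvd: "m dvd n + 1" by (simp only: of_nat_dvd_iff)
  have P1: "\<forall>(V :: 'a set) E. bipartite_biregular m n 6 V E \<longrightarrow>
            real (card V) \<ge> (real n / real m + 1) * (real n + 1) * (real m - 1)"
    using part1[OF assms(1) dvd] by blast
  have P2: "bipartite_biregular m n 6 (inc_vertices (del_points P p) (del_blocks Bl p))
                                      (inc_edges (del_points P p) (del_blocks Bl p))
          \<and> real (card (inc_vertices (del_points P p) (del_blocks Bl p)))
              = (real n / real m + 1) * (real n + 1) * (real m - 1)
          \<and> is_bb_cage m n 6 (inc_vertices (del_points P p) (del_blocks Bl p))
                             (inc_edges (del_points P p) (del_blocks Bl p))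
          \<and> real (Bc m n 6) = (real n / real m + 1) * (real n + 1) * (real m - 1)"
    if st: "steiner_system_2 m (n * (m - 1) + m) P Bl" and pP: "p \<in> P" for P :: "'p set" and Bl p
  proof -
    define V' where "V' = inc_vertices (del_points P p) (del_blocks Bl p)"
    define E' where "E' = inc_edges (del_points P p) (del_blocks Bl p)"
    have h: "bipartite_biregular m n 6 V' E'"
      and c: "real (card V') = (real n / real m + 1) * (real n + 1) * (real m - 1)"
      using part2[OF assms(1,2) dvd st pP] unfolding V'_def E'_def del_points_def del_blocks_def
      by auto
    have finV: "finite V'" using h by (rule bb_finite)
    obtain f :: "_ \<Rightarrow> nat" and N where f: "f ` V' = {i. i < N}" "inj_on f V'"
      using finite_imp_inj_to_nat_seg[OF finV] by blast
    have ex: "\<exists>(V::nat set) E. bipartite_biregular m n 6 V E \<and> card V = card V'"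
    proof (intro exI conjI)
      show "bipartite_biregular m n 6 (f ` V')
           (\<lambda>u w. u \<in> f ` V' \<and> w \<in> f ` V' \<and> E' (inv_into V' f u) (inv_into V' f w))"
        by (rule bb_transfer[OF h f(2)])
      show "card (f ` V') = card V'" using f(2) by (rule card_image)
    qed
    have Bc: "Bc m n 6 = card V'"
      unfolding Bc_def
    proof (rule Least_equality)
      show "\<exists>(V::nat set) E. bipartite_biregular m n 6 V E \<and> card V = card V'" by (rule ex)
      fix y assume "\<exists>(V::nat set) E. bipartite_biregular m n 6 V E \<and> card V = y"
      then obtain V :: "nat set" and E where "bipartite_biregular m n 6 V E" "card V = y" by blast
      then have "real y \<ge> real (card V')" using part1[OF assms(1) dvd] c by auto
      then show "card V' \<le> y" by simp
    qed
    have cage: "is_bb_cage m n 6 V' E'" unfolding is_bb_cage_def using h Bc by simp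
    show ?thesis using h c cage Bc unfolding V'_def E'_def by simp
  qed
  show ?thesis using P1 P2 by blast
qed

end
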